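(* Let $X$ be a topological space and let $\kappa,\mu\in\mathrm{MG}(X)$ be cardinals with $\kappa<\mu$. Assume that either (1) $\kappa=1$ and $\omega_0<\mu$, or (2) $\omega_0\le\kappa$. Then $X$ is discrete.
   Context: A linearly ordered Abelian group is an Abelian group with a linear order compatible with addition. For $x,y\in G_{>0}$, $x\asymp y$ iff $y\le nx$ and $x\le my$ for some $n,m\in\mathbb{Z}_{\ge1}$; $\mathrm{Arc}(G)=G_{>0}/\asymp$, ordered by $[x]\preceq[y]$ iff ($nx<y$ for all $n$) or $x\asymp y$; $\mathrm{Arc}(G)^\perp$ is $\mathrm{Arc}(G)$ with a new least element adjoined. For a bottomed linearly ordered set $S$ (least element $\perp_S$, $S^*=S\setminus\{\perp_S\}$), $\chi(S)$ is the least cardinal $\kappa>0$ such that some strictly decreasing family $(s_\alpha)_{\alpha<\kappa}$ in $S^*$ has every $t\in S^*$ bounded below by some $s_\alpha$. A $G$-metric on $X$: $d\colon X^2\to G$ with $d(x,y)=0\iff x=y$, $d\ge0$, symmetric, triangle inequality; $\mathrm{Met}(X;G)$ is the set of $G$-metrics generating the topology of $X$ via open balls of radii in $G_{>0}$. $\kappa\in\mathrm{MG}(X)$ iff some linearly ordered Abelian group $G$ with $\chi(\mathrm{Arc}(G)^\perp)=\kappa$ has $\mathrm{Met}(X;G)\ne\emptyset$. *)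

theory Defs
  imports "HOL-Analysis.Analysis"
begin

primrec nsmul :: "nat \<Rightarrow> 'g::linordered_ab_group_add \<Rightarrow> 'g" where
  "nsmul 0 x = 0"
| "nsmul (Suc n) x = x + nsmul n x"

definition arc_equiv :: "'g::linordered_ab_group_add \<Rightarrow> 'g \<Rightarrow> bool" where
  "arc_equiv x y \<longleftrightarrow> 0 < x \<and> 0 < y \<and>
     (\<exists>n::nat. n \<ge> 1 \<and> y \<le> nsmul n x) \<and> (\<exists>m::nat. m \<ge> 1 \<and> x \<le> nsmul m y)"

definition Arc :: "'g::linordered_ab_group_add set set" where
  "Arc = {{y. arc_equiv x y} | x. 0 < x}"

definition arc_le :: "'g::linordered_ab_group_add set \<Rightarrow> 'g set \<Rightarrow> bool" where
  "arc_le A B \<longleftrightarrow> (\<exists>x\<in>A. \<exists>y\<in>B. (\<forall>n::nat. n \<ge> 1 \<longrightarrow> nsmul n x < y) \<or> arc_equiv x y)"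

text \<open>Arc(G)^perp: Arc(G) with a new least element adjoined (None).\<close>
definition Arc_bot :: "'g::linordered_ab_group_add set option set" where
  "Arc_bot = insert None (Some ` Arc)"

fun arc_bot_le :: "'g::linordered_ab_group_add set option \<Rightarrow> 'g set option \<Rightarrow> bool" where
  "arc_bot_le None _ = True"
| "arc_bot_le (Some A) None = False"
| "arc_bot_le (Some A) (Some B) = arc_le A B"

text \<open>For a bottomed linearly ordered set (S, le) with least element bot, and a cardinal
  kappa (an initial-ordinal well-order, i.e. Card_order), there is a strictly decreasing
  family indexed by kappa in S* which is coinitial (every t in S* is bounded below by some member).\<close>
definition chi_family :: "'s set \<Rightarrow> ('s \<Rightarrow> 's \<Rightarrow> bool) \<Rightarrow> 's \<Rightarrow> 'k rel \<Rightarrow> bool" where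
  "chi_family S le b \<kappa> \<longleftrightarrow> (\<exists>s. (\<forall>i\<in>Field \<kappa>. s i \<in> S - {b})
      \<and> (\<forall>i j. (i, j) \<in> \<kappa> \<and> i \<noteq> j \<longrightarrow> le (s j) (s i) \<and> s j \<noteq> s i)
      \<and> (\<forall>t\<in>S - {b}. \<exists>i\<in>Field \<kappa>. le (s i) t))"

definition chi_is :: "'s set \<Rightarrow> ('s \<Rightarrow> 's \<Rightarrow> bool) \<Rightarrow> 's \<Rightarrow> 'k rel \<Rightarrow> bool" where
  "chi_is S le b \<kappa> \<longleftrightarrow> Card_order \<kappa> \<and> Field \<kappa> \<noteq> {} \<and> chi_family S le b \<kappa>
      \<and> (\<forall>\<nu>::'k rel. Card_order \<nu> \<and> Field \<nu> \<noteq> {} \<and> chi_family S le b \<nu> \<longrightarrow> (\<kappa>, \<nu>) \<in> ordLeq)"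

definition is_Gmetric :: "'a set \<Rightarrow> ('a \<Rightarrow> 'a \<Rightarrow> 'g::linordered_ab_group_add) \<Rightarrow> bool" where
  "is_Gmetric A d \<longleftrightarrow>
     (\<forall>x\<in>A. \<forall>y\<in>A. (d x y = 0 \<longleftrightarrow> x = y) \<and> 0 \<le> d x y \<and> d x y = d y x)
   \<and> (\<forall>x\<in>A. \<forall>y\<in>A. \<forall>z\<in>A. d x z \<le> d x y + d y z)"

definition gball :: "'a set \<Rightarrow> ('a \<Rightarrow> 'a \<Rightarrow> 'g::linordered_ab_group_add) \<Rightarrow> 'a \<Rightarrow> 'g \<Rightarrow> 'a set" where
  "gball A d x r = {y\<in>A. d x y < r}"

definition Met :: "'a topology \<Rightarrow> ('a \<Rightarrow> 'a \<Rightarrow> 'g::linordered_ab_group_add) set" where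
  "Met X = {d. is_Gmetric (topspace X) d \<and>
      X = topology_generated_by {gball (topspace X) d x r | x r. x \<in> topspace X \<and> 0 < r}}"

text \<open>Cardinals kappa witnessed for MG(X) by some linearly ordered Abelian group on the type 'g.
  MG(X) is the union of these over all types 'g.\<close>
definition MG :: "'a topology \<Rightarrow> 'g::linordered_ab_group_add itself \<Rightarrow> 'k rel set" where
  "MG X T = {\<kappa>. \<exists>d::'a \<Rightarrow> 'a \<Rightarrow> 'g. d \<in> Met X \<and> chi_is (Arc_bot::'g set option set) arc_bot_le None \<kappa>}"

end

theory Submission
  imports Defs
begin

unbundle cardinal_syntax


lemma nsmul_add: "nsmul (m+n) x = nsmul m x + nsmul n x"
  by (induction m) (simp_all add: add.assoc)

lemma nsmul_mult: "nsmul (m*n) x = nsmul m (nsmul n x)"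
  by (induction m) (simp_all add: nsmul_add)

lemma nsmul_one[simp]: "nsmul 1 x = x"
  by simp

lemma nsmul_mono: "(x::'g::linordered_ab_group_add) \<le> y \<Longrightarrow> nsmul n x \<le> nsmul n y"
  by (induction n) (simp_all add: add_mono)

lemma nsmul_strict: "(x::'g::linordered_ab_group_add) < y \<Longrightarrow> n \<ge> 1 \<Longrightarrow> nsmul n x < nsmul n y"
proof (induction n)
  case 0 then show ?case by simp
next
  case (Suc n)
  have "nsmul n x \<le> nsmul n y" using Suc.prems nsmul_mono[of x y n] by simp
  then show ?case using Suc.prems by (simp add: add_less_le_mono)
qed

lemma nsmul_cancel: "n \<ge> 1 \<Longrightarrow> nsmul n (x::'g::linordered_ab_group_add) \<le> nsmul n y \<Longrightarrow> x \<le> y"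
  using nsmul_strict[of y x n] by (meson not_le)

lemma nsmul_nonneg: "0 \<le> (x::'g::linordered_ab_group_add) \<Longrightarrow> 0 \<le> nsmul n x"
  by (induction n) simp_all

lemma nsmul_mono_n: "0 \<le> (x::'g::linordered_ab_group_add) \<Longrightarrow> m \<le> n \<Longrightarrow> nsmul m x \<le> nsmul n x"
proof -
  assume "0 \<le> x" "m \<le> n"
  then obtain k where "n = k + m" by (metis add.commute le_add_diff_inverse)
  then show ?thesis using nsmul_nonneg[OF \<open>0 \<le> x\<close>, of k] by (simp add: nsmul_add)
qed

definition arcQ :: "'g::linordered_ab_group_add \<Rightarrow> 'g \<Rightarrow> bool" where
  "arcQ x y \<longleftrightarrow> (\<exists>m::nat. m \<ge> 1 \<and> x \<le> nsmul m y)"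

lemma arcQ_refl: "arcQ x x"
  unfolding arcQ_def by (rule exI[of _ 1]) simp

lemma arcQ_le: "x \<le> y \<Longrightarrow> arcQ x y"
  unfolding arcQ_def by (rule exI[of _ 1]) simp

lemma arcQ_total: "arcQ x y \<or> arcQ y x"
  using arcQ_le by (metis linear)

lemma arcQ_trans: assumes "arcQ x y" "arcQ y z" shows "arcQ x z"
proof -
  obtain m where m: "m \<ge> 1" "x \<le> nsmul m y" using assms(1) arcQ_def by blast
  obtain n where n: "n \<ge> 1" "y \<le> nsmul n z" using assms(2) arcQ_def by blast
  have "x \<le> nsmul m (nsmul n z)" using m n nsmul_mono order_trans by blast
  then have "x \<le> nsmul (m*n) z" by (simp add: nsmul_mult)
  moreover have "m*n \<ge> 1" using m n by simp
  ultimately show ?thesis unfolding arcQ_def by blast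
qed

lemma arc_equiv_Q: "arc_equiv x y \<longleftrightarrow> 0 < x \<and> 0 < y \<and> arcQ y x \<and> arcQ x y"
  unfolding arc_equiv_def arcQ_def by blast

definition cls :: "'g::linordered_ab_group_add \<Rightarrow> 'g set" where
  "cls x = {y. arc_equiv x y}"

lemma cls_mem: "0 < x \<Longrightarrow> x \<in> cls x"
  unfolding cls_def arc_equiv_Q using arcQ_refl by blast

lemma cls_eq: assumes "0 < x" "0 < y" "cls x = cls y" shows "arc_equiv x y"
  using cls_mem[OF assms(2)] assms(3) unfolding cls_def by blast

lemma arc_le_cls: assumes "0 < x" "0 < y"
  shows "arc_le (cls x) (cls y) \<longleftrightarrow> arcQ x y"
proof
  assume "arc_le (cls x) (cls y)"
  then obtain x' y' where x': "arc_equiv x x'" and y': "arc_equiv y y'"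
    and P: "(\<forall>n::nat. n \<ge> 1 \<longrightarrow> nsmul n x' < y') \<or> arc_equiv x' y'"
    unfolding arc_le_def cls_def by blast
  have "arcQ x' y'"
  proof (cases "arc_equiv x' y'")
    case True then show ?thesis using arc_equiv_Q by blast
  next
    case False
    then have "nsmul 1 x' < y'" using P by blast
    then show ?thesis by (intro arcQ_le) simp
  qed
  moreover have "arcQ x x'" "arcQ y' y" using x' y' arc_equiv_Q by blast+
  ultimately show "arcQ x y" using arcQ_trans by blast
next
  assume Q: "arcQ x y"
  have "(\<forall>n::nat. n \<ge> 1 \<longrightarrow> nsmul n x < y) \<or> arc_equiv x y"
  proof (cases "\<forall>n::nat. n \<ge> 1 \<longrightarrow> nsmul n x < y")
    case False
    then obtain n::nat where "n \<ge> 1" "y \<le> nsmul n x" by (meson not_le)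
    then have "arcQ y x" unfolding arcQ_def by blast
    then show ?thesis using Q assms arc_equiv_Q by blast
  qed simp
  then show "arc_le (cls x) (cls y)" unfolding arc_le_def using cls_mem assms by blast
qed

lemma Arc_iff: "A \<in> Arc \<longleftrightarrow> (\<exists>x. 0 < x \<and> A = cls x)"
  unfolding Arc_def cls_def by blast

lemma Arc_bot_star: "Arc_bot - {None} = Some ` Arc"
  unfolding Arc_bot_def by auto

lemma arc_bot_star_iff: "a \<in> (Arc_bot::'g::linordered_ab_group_add set option set) - {None} \<longleftrightarrow> (\<exists>x. 0 < x \<and> a = Some (cls x))"
  unfolding Arc_bot_star image_iff using Arc_iff by metis

lemma arc_bot_props:
  shows "\<forall>a\<in>(Arc_bot::'g::linordered_ab_group_add set option set)-{None}. arc_bot_le a a"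
    and "\<forall>a\<in>(Arc_bot::'g set option set)-{None}. \<forall>b\<in>Arc_bot-{None}. arc_bot_le a b \<or> arc_bot_le b a"
    and "\<forall>a\<in>(Arc_bot::'g set option set)-{None}. \<forall>b\<in>Arc_bot-{None}. \<forall>c\<in>Arc_bot-{None}.
           arc_bot_le a b \<longrightarrow> arc_bot_le b c \<longrightarrow> arc_bot_le a c"
proof -
  show "\<forall>a\<in>(Arc_bot::'g::linordered_ab_group_add set option set)-{None}. arc_bot_le a a"
  proof
    fix a :: "'g set option" assume "a \<in> Arc_bot - {None}"
    then obtain x where "0 < x" "a = Some (cls x)" using arc_bot_star_iff by blast
    then show "arc_bot_le a a" using arc_le_cls[of x x] arcQ_refl[of x] by simp
  qed
  show "\<forall>a\<in>(Arc_bot::'g set option set)-{None}. \<forall>b\<in>Arc_bot-{None}. arc_bot_le a b \<or> arc_bot_le b a"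
  proof (intro ballI)
    fix a b :: "'g set option" assume "a \<in> Arc_bot - {None}" "b \<in> Arc_bot - {None}"
    then obtain x y where "0 < x" "a = Some (cls x)" "0 < y" "b = Some (cls y)" using arc_bot_star_iff by metis
    then show "arc_bot_le a b \<or> arc_bot_le b a" using arc_le_cls[of x y] arc_le_cls[of y x] arcQ_total[of x y] by simp
  qed
  show "\<forall>a\<in>(Arc_bot::'g set option set)-{None}. \<forall>b\<in>Arc_bot-{None}. \<forall>c\<in>Arc_bot-{None}.
           arc_bot_le a b \<longrightarrow> arc_bot_le b c \<longrightarrow> arc_bot_le a c"
  proof (intro ballI impI)
    fix a b c :: "'g set option" assume "a \<in> Arc_bot - {None}" "b \<in> Arc_bot - {None}" "c \<in> Arc_bot - {None}"
      and ab: "arc_bot_le a b" and bc: "arc_bot_le b c"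
    then obtain x y z where "0 < x" "a = Some (cls x)" "0 < y" "b = Some (cls y)" "0 < z" "c = Some (cls z)"
      using arc_bot_star_iff by metis
    then show "arc_bot_le a c" using ab bc arc_le_cls[of x y] arc_le_cls[of y z] arc_le_cls[of x z] arcQ_trans[of x y z] by simp
  qed
qed



lemma chi_transport:
  fixes W :: "'w rel" and \<mu> :: "'m rel"
  assumes W: "Card_order W" "Field W \<noteq> {}" "chi_family S le b W" and Wl: "W <o \<mu>"
    and mu: "chi_is S le b \<mu>"
  shows False
proof -
  have cm: "Card_order \<mu>" using mu unfolding chi_is_def by blast
  have a1: "|Field W| =o W" using card_of_Field_ordIso W(1) by blast
  have a2: "W \<le>o \<mu>" using Wl ordLess_imp_ordLeq by blast
  have a3: "\<mu> =o |Field \<mu>|" using card_of_Field_ordIso[OF cm] by (rule ordIso_symmetric)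
  have "|Field W| \<le>o |Field \<mu>|" by (rule ordLeq_ordIso_trans[OF ordIso_ordLeq_trans[OF a1 a2] a3])
  then have "\<exists>g. inj_on g (Field W) \<and> g ` Field W \<subseteq> Field \<mu>" by (simp only: card_of_ordLeq)
  then obtain g where g: "inj_on g (Field W)" "g ` Field W \<subseteq> Field \<mu>" by blast
  define \<nu> where "\<nu> = dir_image W g"
  have wW: "Well_order W" using W(1) unfolding card_order_on_def by blast
  have iso: "W =o \<nu>" unfolding \<nu>_def using dir_image_ordIso[OF wW g(1)] .
  have cn: "Card_order \<nu>" using Card_order_ordIso2[OF W(1) iso] .
  have fn: "Field \<nu> = g ` Field W" unfolding \<nu>_def by (rule dir_image_Field)
  have nl: "\<nu> <o \<mu>" by (rule ordIso_ordLess_trans[OF ordIso_symmetric[OF iso] Wl])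
  obtain s where s1: "\<forall>i\<in>Field W. s i \<in> S - {b}"
    and s2: "\<forall>i j. (i, j) \<in> W \<and> i \<noteq> j \<longrightarrow> le (s j) (s i) \<and> s j \<noteq> s i"
    and s3: "\<forall>t\<in>S - {b}. \<exists>i\<in>Field W. le (s i) t"
    using W(3) unfolding chi_family_def by blast
  define s' where "s' = s \<circ> inv_into (Field W) g"
  have s'g: "s' (g i) = s i" if "i \<in> Field W" for i
    unfolding s'_def using inv_into_f_f[OF g(1) that] by simp
  have A: "\<forall>i\<in>Field \<nu>. s' i \<in> S - {b}"
  proof
    fix i assume "i \<in> Field \<nu>"
    then obtain a where "a \<in> Field W" "i = g a" using fn by blast
    then show "s' i \<in> S - {b}" using s1 s'g by simp
  qed
  have B: "\<forall>i j. (i, j) \<in> \<nu> \<and> i \<noteq> j \<longrightarrow> le (s' j) (s' i) \<and> s' j \<noteq> s' i"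
  proof (intro allI impI)
    fix i j assume "(i, j) \<in> \<nu> \<and> i \<noteq> j"
    then obtain a c where ac: "(a, c) \<in> W" "i = g a" "j = g c" "a \<noteq> c"
      unfolding \<nu>_def dir_image_def by blast
    have "a \<in> Field W" "c \<in> Field W" using ac(1) by (auto intro: FieldI1 FieldI2)
    then show "le (s' j) (s' i) \<and> s' j \<noteq> s' i" using s2 ac s'g by simp
  qed
  have C: "\<forall>t\<in>S - {b}. \<exists>i\<in>Field \<nu>. le (s' i) t"
  proof
    fix t assume "t \<in> S - {b}"
    then obtain i where "i \<in> Field W" "le (s i) t" using s3 by blast
    then show "\<exists>i\<in>Field \<nu>. le (s' i) t" using fn s'g by force
  qed
  have "chi_family S le b \<nu>" unfolding chi_family_def
    by (rule exI[of _ s']) (use A B C in simp)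
  moreover have "Field \<nu> \<noteq> {}" using fn W(2) by simp
  ultimately have "\<mu> \<le>o \<nu>" using mu cn unfolding chi_is_def by blast
  then show False using not_ordLess_ordLeq[OF nl] by simp
qed

lemma finite_min_ex:
  assumes "finite Y" "Y \<noteq> {}" "Y \<subseteq> T"
    and tot: "\<forall>x\<in>T. \<forall>y\<in>T. le x y \<or> le y x"
    and rf: "\<forall>x\<in>T. le x x"
    and tr: "\<forall>x\<in>T. \<forall>y\<in>T. \<forall>z\<in>T. le x y \<longrightarrow> le y z \<longrightarrow> le x z"
  shows "\<exists>m\<in>Y. \<forall>y\<in>Y. le m y"
  using assms(1-3)
proof (induction Y rule: finite_ne_induct)
  case (singleton x) then show ?case using rf by auto
next
  case (insert x F)
  then obtain m where m: "m \<in> F" "\<forall>y\<in>F. le m y" by auto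
  show ?case
  proof (cases "le x m")
    case True
    then have "\<forall>y\<in>insert x F. le x y" using m insert.prems tr rf by blast
    then show ?thesis by blast
  next
    case False
    then have "le m x" using tot insert.prems m by blast
    then show ?thesis using m by blast
  qed
qed

lemma chi_small:
  fixes \<mu> :: "'m rel" and Z :: "'s set"
  assumes mu: "chi_is S le b \<mu>"
    and rf: "\<forall>x\<in>S-{b}. le x x"
    and tot: "\<forall>x\<in>S-{b}. \<forall>y\<in>S-{b}. le x y \<or> le y x"
    and tr: "\<forall>x\<in>S-{b}. \<forall>y\<in>S-{b}. \<forall>z\<in>S-{b}. le x y \<longrightarrow> le y z \<longrightarrow> le x z"
    and Zs: "Z \<subseteq> S-{b}" and Zc: "\<forall>t\<in>S-{b}. \<exists>z\<in>Z. le z t"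
  shows "\<not> |Z| <o \<mu>"
proof
  assume Zl: "|Z| <o \<mu>"
  define C where "C = {Y. Y \<subseteq> S-{b} \<and> (\<forall>t\<in>S-{b}. \<exists>z\<in>Y. le z t)}"
  have "Z \<in> C" using Zs Zc C_def by blast
  then have "card_of ` C \<noteq> {}" by blast
  moreover have "\<forall>r\<in>card_of ` C. Card_order r" using card_of_Card_order by blast
  ultimately obtain r0 where "r0 \<in> card_of ` C" "\<forall>r'\<in>card_of ` C. r0 \<le>o r'"
    using exists_minim_Card_order[of "card_of ` C"] by blast
  then obtain Y0 where Y0: "Y0 \<in> C" and Y0m: "\<And>Y. Y \<in> C \<Longrightarrow> |Y0| \<le>o |Y|" by blast
  have Y0l: "|Y0| <o \<mu>" using Y0m[OF \<open>Z \<in> C\<close>] Zl ordLeq_ordLess_trans by blast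
  have "Field \<mu> \<noteq> {}" using mu unfolding chi_is_def by simp
  then obtain i0 where "i0 \<in> Field \<mu>" by blast
  moreover have "chi_family S le b \<mu>" using mu unfolding chi_is_def by simp
  then obtain s0 where "\<forall>i\<in>Field \<mu>. s0 i \<in> S - {b}" unfolding chi_family_def by blast
  ultimately have Sne: "S - {b} \<noteq> {}" by blast
  have Y0s: "Y0 \<subseteq> S - {b}" and Y0c: "\<forall>t\<in>S-{b}. \<exists>z\<in>Y0. le z t" using Y0 C_def by auto
  then have Y0ne: "Y0 \<noteq> {}" using Sne by blast
  show False
  proof (cases "finite Y0")
    case True
    obtain m where m: "m \<in> Y0" "\<forall>y\<in>Y0. le m y"
      using finite_min_ex[OF True Y0ne Y0s tot rf tr] by blast
    let ?W = "|{m}|"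
    have fW: "Field ?W = {m}" by (rule Field_card_of)
    have A: "\<forall>i\<in>Field ?W. i \<in> S - {b}" using fW m Y0s by auto
    have B: "\<forall>i j. (i, j) \<in> ?W \<and> i \<noteq> j \<longrightarrow> le j i \<and> j \<noteq> i"
    proof (intro allI impI)
      fix i j assume ij: "(i, j) \<in> ?W \<and> i \<noteq> j"
      then have "i \<in> Field ?W" "j \<in> Field ?W" by (auto intro: FieldI1 FieldI2)
      then show "le j i \<and> j \<noteq> i" using fW ij by auto
    qed
    have C: "\<forall>t\<in>S - {b}. \<exists>i\<in>Field ?W. le i t"
    proof
      fix t assume t: "t \<in> S - {b}"
      then obtain y where "y \<in> Y0" "le y t" using Y0c by blast
      then have "le m t" using m tr Y0s t by blast
      then show "\<exists>i\<in>Field ?W. le i t" using fW by auto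
    qed
    have cf: "chi_family S le b ?W" unfolding chi_family_def
      by (rule exI[of _ "\<lambda>x. x"]) (use A B C in simp)
    have wl: "?W <o \<mu>" by (rule ordLeq_ordLess_trans[OF card_of_singl_ordLeq[OF Y0ne] Y0l])
    show False by (rule chi_transport[OF card_of_Card_order _ cf wl mu]) (simp add: fW)
  next
    case inf: False
    let ?W = "|Y0|"
    have cW: "Card_order ?W" by (rule card_of_Card_order)
    have fW: "Field ?W = Y0" by (rule Field_card_of)
    have wW: "Well_order ?W" using cW unfolding card_order_on_def by blast
    have wf: "wf (?W - Id)" using wW unfolding well_order_on_def by blast
    define H where "H = (\<lambda>(f::'s \<Rightarrow> 's) k. SOME t. t \<in> S - {b} \<and>
        (\<forall>k'. (k', k) \<in> ?W - Id \<longrightarrow> \<not> le (f k') t) \<and> \<not> le k t)"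
    define f where "f = wfrec (?W - Id) H"
    have fk: "f k = H f k" for k
    proof -
      have "f k = H (cut f (?W - Id) k) k" unfolding f_def by (rule wfrec[OF wf])
      also have "\<dots> = H f k" unfolding H_def by (simp add: cut_apply)
      finally show ?thesis .
    qed
    have P: "k \<in> Y0 \<longrightarrow> f k \<in> S - {b} \<and> (\<forall>k'. (k', k) \<in> ?W - Id \<longrightarrow> \<not> le (f k') (f k)) \<and> \<not> le k (f k)" for k
    proof (induction k rule: wf_induct[OF wf])
      case (1 k)
      show ?case
      proof
        assume kY: "k \<in> Y0"
        define F where "F = f ` underS ?W k \<union> {k}"
        have us: "underS ?W k \<subseteq> Y0" using fW unfolding underS_def by (auto intro: FieldI1)
        have ur: "k' \<in> underS ?W k \<longleftrightarrow> (k', k) \<in> ?W - Id" for k' unfolding underS_def by auto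
        have Fs: "F \<subseteq> S - {b}" unfolding F_def using 1 us ur kY Y0s by blast
        have "|f ` underS ?W k| \<le>o |underS ?W k|" by (rule card_of_image)
        moreover have "|underS ?W k| <o ?W" using card_of_underS[OF cW] kY fW by blast
        ultimately have l1: "|f ` underS ?W k| <o |Y0|" by (rule ordLeq_ordLess_trans)
        have l2: "|{k}| <o |Y0|"
          using finite_ordLess_infinite[OF card_of_Well_order card_of_Well_order, of "{k}" Y0] inf
          by (simp add: Field_card_of)
        have "|F| <o |Y0|" unfolding F_def using card_of_Un_ordLess_infinite[OF inf l1 l2] .
        then have "F \<notin> C" using Y0m not_ordLess_ordLeq by metis
        then obtain t where t: "t \<in> S - {b}" "\<forall>y\<in>F. \<not> le y t" using Fs C_def by blast
        have ex: "\<exists>t. t \<in> S - {b} \<and> (\<forall>k'. (k', k) \<in> ?W - Id \<longrightarrow> \<not> le (f k') t) \<and> \<not> le k t"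
          using t ur unfolding F_def by blast
        have "f k \<in> S - {b} \<and> (\<forall>k'. (k', k) \<in> ?W - Id \<longrightarrow> \<not> le (f k') (f k)) \<and> \<not> le k (f k)"
          unfolding fk[of k] H_def using someI_ex[OF ex] by simp
        then show "f k \<in> S - {b} \<and> (\<forall>k'. (k', k) \<in> ?W - Id \<longrightarrow> \<not> le (f k') (f k)) \<and> \<not> le k (f k)" .
      qed
    qed
    have A: "\<forall>i\<in>Field ?W. f i \<in> S - {b}" using P fW by simp
    have B: "\<forall>i j. (i, j) \<in> ?W \<and> i \<noteq> j \<longrightarrow> le (f j) (f i) \<and> f j \<noteq> f i"
    proof (intro allI impI)
      fix i j assume ij: "(i, j) \<in> ?W \<and> i \<noteq> j"
      then have "i \<in> Y0" "j \<in> Y0" using fW by (auto intro: FieldI1 FieldI2)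
      have fi: "f i \<in> S - {b}" using P[of i] \<open>i \<in> Y0\<close> by simp
      have Pj: "f j \<in> S - {b} \<and> (\<forall>k'. (k', j) \<in> ?W - Id \<longrightarrow> \<not> le (f k') (f j))"
        using P[of j] \<open>j \<in> Y0\<close> by simp
      have fj: "f j \<in> S - {b}" using Pj by simp
      have nl: "\<not> le (f i) (f j)" using Pj ij by simp
      have "le (f j) (f i)" using tot fi fj nl by blast
      moreover have "f j \<noteq> f i" using rf fj nl by metis
      ultimately show "le (f j) (f i) \<and> f j \<noteq> f i" by blast
    qed
    have C: "\<forall>t\<in>S - {b}. \<exists>i\<in>Field ?W. le (f i) t"
    proof
      fix t assume t: "t \<in> S - {b}"
      then obtain y where y: "y \<in> Y0" "le y t" using Y0c by blast
      then have "f y \<in> S - {b}" "\<not> le y (f y)" using P[of y] by simp_all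
      then have "le (f y) y" using tot y Y0s by blast
      then have "le (f y) t" using tr y Y0s t \<open>f y \<in> S - {b}\<close> by blast
      then show "\<exists>i\<in>Field ?W. le (f i) t" using fW y by blast
    qed
    have cf: "chi_family S le b ?W" unfolding chi_family_def
      by (rule exI[of _ f]) (use A B C in simp)
    show False by (rule chi_transport[OF cW _ cf Y0l mu]) (simp add: fW Y0ne)
  qed
qed



lemma arc_equiv_cls: assumes "arc_equiv x y" shows "cls x = cls y"
proof -
  have "arc_equiv x z \<longleftrightarrow> arc_equiv y z" for z
    using assms arcQ_trans unfolding arc_equiv_Q by blast
  then show ?thesis unfolding cls_def by blast
qed

lemma Gm_basic:
  assumes "is_Gmetric A d" "x \<in> A" "y \<in> A"
  shows "d x x = 0" "0 \<le> d x y" "x \<noteq> y \<Longrightarrow> 0 < d x y" "d x y = d y x"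
    "z \<in> A \<Longrightarrow> d x z \<le> d x y + d y z"
  using assms unfolding is_Gmetric_def by (auto simp: order.order_iff_strict)

lemma radii_inf:
  fixes \<kappa> :: "'k rel"
  assumes ch: "chi_is (Arc_bot::'g::linordered_ab_group_add set option set) arc_bot_le None \<kappa>"
    and inf: "natLeq \<le>o \<kappa>"
  shows "\<exists>R::'g set. (\<forall>r\<in>R. 0 < r) \<and> (\<forall>g>0. \<exists>r\<in>R. r \<le> g) \<and> |R| \<le>o \<kappa>"
proof -
  have ck: "Card_order \<kappa>" using ch unfolding chi_is_def by simp
  have "chi_family (Arc_bot::'g set option set) arc_bot_le None \<kappa>" using ch unfolding chi_is_def by simp
  then obtain s where s1: "\<forall>i\<in>Field \<kappa>. s i \<in> (Arc_bot::'g set option set) - {None}"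
    and s2: "\<forall>i j. (i, j) \<in> \<kappa> \<and> i \<noteq> j \<longrightarrow> arc_bot_le (s j) (s i) \<and> s j \<noteq> s i"
    and s3: "\<forall>t\<in>(Arc_bot::'g set option set) - {None}. \<exists>i\<in>Field \<kappa>. arc_bot_le (s i) t"
    unfolding chi_family_def by blast
  have fk: "|Field \<kappa>| =o \<kappa>" by (rule card_of_Field_ordIso[OF ck])
  have "natLeq \<le>o |Field \<kappa>|" by (rule ordLeq_ordIso_trans[OF inf ordIso_symmetric[OF fk]])
  then have infF: "\<not> finite (Field \<kappa>)" using infinite_iff_natLeq_ordLeq by blast
  have wk: "Well_order \<kappa>" using ck unfolding card_order_on_def by simp
  then have tot: "\<forall>a\<in>Field \<kappa>. \<forall>b\<in>Field \<kappa>. a \<noteq> b \<longrightarrow> (a, b) \<in> \<kappa> \<or> (b, a) \<in> \<kappa>"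
    unfolding well_order_on_def linear_order_on_def total_on_def by blast
  have nomax: "\<exists>j. (i, j) \<in> \<kappa> \<and> j \<noteq> i" if i: "i \<in> Field \<kappa>" for i
  proof (rule ccontr)
    assume "\<not> (\<exists>j. (i, j) \<in> \<kappa> \<and> j \<noteq> i)"
    then have "Field \<kappa> \<subseteq> underS \<kappa> i \<union> {i}" using tot i unfolding underS_def by blast
    then have l0: "|Field \<kappa>| \<le>o |underS \<kappa> i \<union> {i}|" by (rule card_of_mono1)
    have l1: "|underS \<kappa> i| <o |Field \<kappa>|"
      by (rule ordLess_ordIso_trans[OF card_of_underS[OF ck i] ordIso_symmetric[OF fk]])
    have l2: "|{i}| <o |Field \<kappa>|"
      using finite_ordLess_infinite[OF card_of_Well_order card_of_Well_order, of "{i}" "Field \<kappa>"] infF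
      by (simp add: Field_card_of)
    have "|underS \<kappa> i \<union> {i}| <o |Field \<kappa>|" by (rule card_of_Un_ordLess_infinite[OF infF l1 l2])
    then show False using not_ordLess_ordLeq l0 by blast
  qed
  define gr where "gr i = (SOME x. 0 < x \<and> s i = Some (cls x))" for i
  have gr: "0 < gr i \<and> s i = Some (cls (gr i))" if "i \<in> Field \<kappa>" for i
  proof -
    have "\<exists>x. 0 < x \<and> s i = Some (cls x)" using s1 that arc_bot_star_iff by blast
    then show ?thesis unfolding gr_def by (rule someI_ex)
  qed
  define R where "R = gr ` Field \<kappa>"
  have "\<forall>r\<in>R. 0 < r" unfolding R_def using gr by blast
  moreover have "\<forall>g>0. \<exists>r\<in>R. r \<le> g"
  proof (intro allI impI)
    fix g :: 'g assume g: "0 < g"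
    then have "Some (cls g) \<in> (Arc_bot::'g set option set) - {None}" using arc_bot_star_iff by blast
    then obtain i where i: "i \<in> Field \<kappa>" "arc_bot_le (s i) (Some (cls g))" using s3 by blast
    then have Qi: "arcQ (gr i) g" using gr[OF i(1)] arc_le_cls[of "gr i" g] g by simp
    obtain j where j: "(i, j) \<in> \<kappa>" "j \<noteq> i" using nomax[OF i(1)] by blast
    have jF: "j \<in> Field \<kappa>" using j(1) by (rule FieldI2)
    have sj: "arc_bot_le (s j) (s i)" "s j \<noteq> s i" using s2 j by blast+
    have pj: "0 < gr j" "s j = Some (cls (gr j))" using gr[OF jF] by auto
    have pi: "0 < gr i" "s i = Some (cls (gr i))" using gr[OF i(1)] by auto
    have Qji: "arcQ (gr j) (gr i)" using sj(1) pj pi arc_le_cls[of "gr j" "gr i"] by simp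
    have nQ: "\<not> arcQ (gr i) (gr j)"
    proof
      assume "arcQ (gr i) (gr j)"
      then have "arc_equiv (gr i) (gr j)" using Qji pi pj arc_equiv_Q by blast
      then have "cls (gr i) = cls (gr j)" by (rule arc_equiv_cls)
      then show False using sj(2) pi pj by simp
    qed
    obtain m :: nat where m: "m \<ge> 1" "gr i \<le> nsmul m g" using Qi unfolding arcQ_def by blast
    have "\<not> gr i \<le> nsmul m (gr j)" using nQ m(1) unfolding arcQ_def by blast
    then have "nsmul m (gr j) \<le> nsmul m g" using m(2) by simp
    then have "gr j \<le> g" using nsmul_cancel m(1) by blast
    then show "\<exists>r\<in>R. r \<le> g" unfolding R_def using jF by blast
  qed
  moreover have "|R| \<le>o \<kappa>" unfolding R_def
    by (rule ordLeq_ordIso_trans[OF card_of_image fk])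
  ultimately show ?thesis by blast
qed

lemma halve_ex:
  fixes c :: "'g::linordered_ab_group_add"
  assumes "0 < r" "r < c"
  shows "\<exists>r'. 0 < r' \<and> r' + r' \<le> c"
proof (cases "r + r \<le> c")
  case True then show ?thesis using assms by blast
next
  case False
  then have "c < r + r" by simp
  then have "(c - r) + (c - r) \<le> c" by (simp add: algebra_simps)
  moreover have "0 < c - r" using assms by simp
  ultimately show ?thesis by blast
qed

lemma radii_one:
  fixes \<kappa> :: "'k rel"
  assumes ch: "chi_is (Arc_bot::'g::linordered_ab_group_add set option set) arc_bot_le None \<kappa>"
    and one: "Field \<kappa> = {i}"
  shows "\<exists>R::'g set. (\<forall>r\<in>R. 0 < r) \<and> (\<forall>g>0. \<exists>r\<in>R. r \<le> g) \<and> |R| \<le>o |UNIV::nat set|"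
proof -
  have "chi_family (Arc_bot::'g set option set) arc_bot_le None \<kappa>" using ch unfolding chi_is_def by simp
  then obtain s where s1: "\<forall>i\<in>Field \<kappa>. s i \<in> (Arc_bot::'g set option set) - {None}"
    and s3: "\<forall>t\<in>(Arc_bot::'g set option set) - {None}. \<exists>i\<in>Field \<kappa>. arc_bot_le (s i) t"
    unfolding chi_family_def by blast
  obtain a where a: "0 < a" "s i = Some (cls a)" using s1 one arc_bot_star_iff by blast
  have aQ: "arcQ a g" if "0 < g" for g
  proof -
    have "Some (cls g) \<in> (Arc_bot::'g set option set) - {None}" using that arc_bot_star_iff by blast
    then obtain j where "j \<in> Field \<kappa>" "arc_bot_le (s j) (Some (cls g))" using s3 by blast
    then have "arc_bot_le (s i) (Some (cls g))" using one by simp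
    then show ?thesis using a arc_le_cls[of a g] that by simp
  qed
  show ?thesis
  proof (cases "\<exists>c::'g. 0 < c \<and> (\<forall>r>0. c \<le> r)")
    case True
    then obtain c :: 'g where c: "0 < c" "\<forall>r>0. c \<le> r" by blast
    have "|{c}| \<le>o |UNIV::nat set|" by (rule card_of_singl_ordLeq) simp
    then show ?thesis using c by blast
  next
    case False
    then have hx: "\<exists>r'. 0 < r' \<and> r' + r' \<le> c" if "0 < c" for c :: 'g
      using halve_ex that by (meson not_le)
    define half where "half c = (SOME r'. 0 < r' \<and> r' + r' \<le> c)" for c :: 'g
    have half: "0 < half c \<and> half c + half c \<le> c" if "0 < c" for c
      unfolding half_def using someI_ex[OF hx[OF that]] .
    define d where "d n = (half ^^ n) a" for n
    have dn: "0 < d n \<and> nsmul (2^n) (d n) \<le> a" for n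
    proof (induction n)
      case 0 then show ?case using a by (simp add: d_def)
    next
      case (Suc n)
      have ds: "d (Suc n) = half (d n)" by (simp add: d_def)
      have h: "0 < d (Suc n)" "d (Suc n) + d (Suc n) \<le> d n" using half[of "d n"] Suc ds by auto
      have "nsmul (2^Suc n) (d (Suc n)) = nsmul (2^n) (nsmul 2 (d (Suc n)))"
        by (simp add: nsmul_mult[symmetric] mult.commute)
      also have "\<dots> = nsmul (2^n) (d (Suc n) + d (Suc n))" by (simp add: numeral_2_eq_2)
      also have "\<dots> \<le> nsmul (2^n) (d n)" using h(2) by (rule nsmul_mono)
      also have "\<dots> \<le> a" using Suc by simp
      finally show ?case using h(1) by simp
    qed
    have "\<forall>g>0. \<exists>r\<in>range d. r \<le> g"
    proof (intro allI impI)
      fix g :: 'g assume g: "0 < g"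
      obtain m :: nat where m: "m \<ge> 1" "a \<le> nsmul m g" using aQ[OF g] unfolding arcQ_def by blast
      have "m \<le> 2^m" by (simp add: less_imp_le)
      then have "nsmul m (d m) \<le> nsmul (2^m) (d m)" using dn[of m] by (intro nsmul_mono_n) auto
      also have "\<dots> \<le> a" using dn by blast
      also have "\<dots> \<le> nsmul m g" by (rule m(2))
      finally have "d m \<le> g" using nsmul_cancel m(1) by blast
      then show "\<exists>r\<in>range d. r \<le> g" by blast
    qed
    moreover have "|range d| \<le>o |UNIV::nat set|" by (rule card_of_image)
    ultimately show ?thesis using dn by blast
  qed
qed

lemma met_open_iff:
  assumes "d \<in> Met X"
  shows "openin X U \<longleftrightarrow> generate_topology_on {gball (topspace X) d x r | x r. x \<in> topspace X \<and> 0 < r} U"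
proof -
  define B where "B = {gball (topspace X) d x r | x r. x \<in> topspace X \<and> 0 < r}"
  have eq: "X = topology_generated_by B"
    using assms unfolding Met_def B_def by blast
  have "openin X U = openin (topology_generated_by B) U"
    using arg_cong[OF eq, of "\<lambda>T. openin T U"] .
  then show ?thesis unfolding B_def[symmetric] openin_topology_generated_by_iff .
qed

lemma met_ball_open:
  assumes "d \<in> Met X" "x \<in> topspace X" "0 < r"
  shows "openin X (gball (topspace X) d x r)"
  unfolding met_open_iff[OF assms(1)] by (rule generate_topology_on.Basis) (use assms in blast)

lemma met_nbhd:
  fixes d :: "'a \<Rightarrow> 'a \<Rightarrow> 'g::linordered_ab_group_add"
  assumes d: "d \<in> Met X" and U: "openin X U" and x: "x \<in> U"
  shows "\<exists>r>0. gball (topspace X) d x r \<subseteq> U"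
proof -
  have gm: "is_Gmetric (topspace X) d" using d unfolding Met_def by blast
  have xt: "x \<in> topspace X" using U x openin_subset by blast
  have gen: "generate_topology_on {gball (topspace X) d x r | x r. x \<in> topspace X \<and> 0 < r} U"
    using U met_open_iff[OF d] by blast
  show ?thesis using gen x
  proof (induction U rule: generate_topology_on.induct)
    case Empty then show ?case by simp
  next
    case (Int a b)
    then obtain r1 r2 where r: "0 < r1" "gball (topspace X) d x r1 \<subseteq> a" "0 < r2" "gball (topspace X) d x r2 \<subseteq> b"
      by blast
    have "gball (topspace X) d x (min r1 r2) \<subseteq> a \<inter> b" using r unfolding gball_def by auto
    then show ?case using r by (metis min_less_iff_conj)
  next
    case (UN K)
    then obtain k where "k \<in> K" "x \<in> k" by blast
    then show ?case using UN.IH by blast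
  next
    case (Basis s)
    then obtain z r where zr: "s = gball (topspace X) d z r" "z \<in> topspace X" "0 < r" by blast
    then have dzx: "d z x < r" using Basis.prems unfolding gball_def by blast
    have "gball (topspace X) d x (r - d z x) \<subseteq> s"
    proof
      fix y assume "y \<in> gball (topspace X) d x (r - d z x)"
      then have y: "y \<in> topspace X" "d x y < r - d z x" unfolding gball_def by auto
      have "d z y \<le> d z x + d x y" using Gm_basic(5)[OF gm zr(2) xt y(1)] .
      also have "\<dots> < r" using y(2) by (simp add: algebra_simps)
      finally show "y \<in> s" using zr(1) y(1) unfolding gball_def by blast
    qed
    moreover have "0 < r - d z x" using dzx by simp
    ultimately show ?case by blast
  qed
qed



lemma main_lemma:
  fixes d :: "'a \<Rightarrow> 'a \<Rightarrow> 'g::linordered_ab_group_add" and e :: "'a \<Rightarrow> 'a \<Rightarrow> 'h::linordered_ab_group_add"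
    and \<mu> :: "'m rel" and R :: "'g set"
  assumes d: "d \<in> Met X" and e: "e \<in> Met X"
    and mu: "chi_is (Arc_bot::'h set option set) arc_bot_le None \<mu>"
    and R1: "\<forall>r\<in>R. 0 < r" and R2: "\<forall>g>0. \<exists>r\<in>R. r \<le> g" and R3: "|R| <o \<mu>"
    and x: "x \<in> topspace X"
  shows "openin X {x}"
proof (rule ccontr)
  assume nop: "\<not> openin X {x}"
  have gd: "is_Gmetric (topspace X) d" using d unfolding Met_def by blast
  have ge: "is_Gmetric (topspace X) e" using e unfolding Met_def by blast
  have ex: "\<exists>y. y \<in> topspace X \<and> y \<noteq> x \<and> d x y < r" if r: "r \<in> R" for r
  proof (rule ccontr)
    assume "\<not> ?thesis"
    then have "gball (topspace X) d x r \<subseteq> {x}" unfolding gball_def by auto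
    moreover have "x \<in> gball (topspace X) d x r" unfolding gball_def
      using x Gm_basic(1)[OF gd x x] R1 r by simp
    ultimately have "gball (topspace X) d x r = {x}" by blast
    then show False using met_ball_open[OF d x] R1 r nop by metis
  qed
  define yf where "yf r = (SOME y. y \<in> topspace X \<and> y \<noteq> x \<and> d x y < r)" for r
  have yf: "yf r \<in> topspace X \<and> yf r \<noteq> x \<and> d x (yf r) < r" if "r \<in> R" for r
    unfolding yf_def using someI_ex[OF ex[OF that]] .
  define Z where "Z = (\<lambda>r. Some (cls (e x (yf r)))) ` R"
  have Zs: "Z \<subseteq> (Arc_bot::'h set option set) - {None}"
  proof
    fix z assume "z \<in> Z"
    then obtain r where r: "r \<in> R" "z = Some (cls (e x (yf r)))" unfolding Z_def by blast
    have "0 < e x (yf r)" using Gm_basic(3)[OF ge x, of "yf r"] yf[OF r(1)] by metis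
    then show "z \<in> (Arc_bot::'h set option set) - {None}" using r(2) arc_bot_star_iff by blast
  qed
  have Zl: "|Z| <o \<mu>" unfolding Z_def by (rule ordLeq_ordLess_trans[OF card_of_image R3])
  have "\<not> (\<forall>t\<in>(Arc_bot::'h set option set) - {None}. \<exists>z\<in>Z. arc_bot_le z t)"
    using chi_small[OF mu arc_bot_props Zs] Zl by blast
  then obtain t where t: "t \<in> (Arc_bot::'h set option set) - {None}" "\<forall>z\<in>Z. \<not> arc_bot_le z t" by blast
  then obtain h :: 'h where h: "0 < h" "t = Some (cls h)" using arc_bot_star_iff by blast
  have "openin X (gball (topspace X) e x h)" by (rule met_ball_open[OF e x h(1)])
  moreover have "x \<in> gball (topspace X) e x h" unfolding gball_def
    using x Gm_basic(1)[OF ge x x] h by simp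
  ultimately obtain g where g: "0 < g" "gball (topspace X) d x g \<subseteq> gball (topspace X) e x h"
    using met_nbhd[OF d] by blast
  obtain r where r: "r \<in> R" "r \<le> g" using R2 g(1) by blast
  have "yf r \<in> gball (topspace X) d x g" unfolding gball_def using yf[OF r(1)] r(2) by auto
  then have "yf r \<in> gball (topspace X) e x h" using g(2) by blast
  then have lt: "e x (yf r) < h" unfolding gball_def by blast
  have pos: "0 < e x (yf r)" using Gm_basic(3)[OF ge x, of "yf r"] yf[OF r(1)] by metis
  have "arc_bot_le (Some (cls (e x (yf r)))) t"
    using h arc_le_cls[OF pos h(1)] arcQ_le[of "e x (yf r)" h] lt by simp
  moreover have "Some (cls (e x (yf r))) \<in> Z" unfolding Z_def using r(1) by blast
  ultimately show False using t(2) by blast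
qed

theorem proposition2p49:
  fixes X :: "'a topology" and \<kappa> :: "'k rel" and \<mu> :: "'m rel"
  assumes "\<kappa> \<in> MG X TYPE('g::linordered_ab_group_add)"
    and "\<mu> \<in> MG X TYPE('h::linordered_ab_group_add)"
    and "(\<kappa>, \<mu>) \<in> ordLess"
    and "((\<exists>i. Field \<kappa> = {i}) \<and> (natLeq, \<mu>) \<in> ordLess) \<or> (natLeq, \<kappa>) \<in> ordLeq"
  shows "X = discrete_topology (topspace X)"
proof -
  obtain d :: "'a \<Rightarrow> 'a \<Rightarrow> 'g" where d: "d \<in> Met X"
    and chk: "chi_is (Arc_bot::'g set option set) arc_bot_le None \<kappa>"
    using assms(1) unfolding MG_def by blast
  obtain e :: "'a \<Rightarrow> 'a \<Rightarrow> 'h" where e: "e \<in> Met X"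
    and chm: "chi_is (Arc_bot::'h set option set) arc_bot_le None \<mu>"
    using assms(2) unfolding MG_def by blast
  have "\<exists>R::'g set. (\<forall>r\<in>R. 0 < r) \<and> (\<forall>g>0. \<exists>r\<in>R. r \<le> g) \<and> |R| <o \<mu>"
    using assms(4)
  proof
    assume c1: "(\<exists>i. Field \<kappa> = {i}) \<and> (natLeq, \<mu>) \<in> ordLess"
    then obtain i where "Field \<kappa> = {i}" by blast
    then obtain R :: "'g set" where R: "\<forall>r\<in>R. 0 < r" "\<forall>g>0. \<exists>r\<in>R. r \<le> g" "|R| \<le>o |UNIV::nat set|"
      using radii_one[OF chk] by blast
    have "|R| \<le>o natLeq" by (rule ordLeq_ordIso_trans[OF R(3) card_of_nat])
    then have "|R| <o \<mu>" using c1 ordLeq_ordLess_trans by blast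
    then show ?thesis using R by blast
  next
    assume c2: "(natLeq, \<kappa>) \<in> ordLeq"
    then obtain R :: "'g set" where R: "\<forall>r\<in>R. 0 < r" "\<forall>g>0. \<exists>r\<in>R. r \<le> g" "|R| \<le>o \<kappa>"
      using radii_inf[OF chk] by blast
    have "|R| <o \<mu>" by (rule ordLeq_ordLess_trans[OF R(3) assms(3)])
    then show ?thesis using R by blast
  qed
  then obtain R :: "'g set" where R: "\<forall>r\<in>R. 0 < r" "\<forall>g>0. \<exists>r\<in>R. r \<le> g" "|R| <o \<mu>" by blast
  have "\<forall>x\<in>topspace X. openin X {x}"
    using main_lemma[OF d e chm R] by blast
  then show ?thesis using discrete_topology_unique by metis
qed


end
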